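(* The following bounds are sharp: for $d,j\in\mathbb{N}$ and $g\in\mathbb{C}[z]$ of degree $d$ with only isolated critical points, (1) the number of distinct critical points of $g$ of multiplicity $j$ is at most $\lfloor\frac{d-1}{j}\rfloor$, and (2) the number of distinct critical points of $g$ of multiplicity $j$ with a common critical value is at most $\lfloor\frac{d}{j+1}\rfloor$. That is, for all $d,j\in\mathbb{N}$ with $d>j$ there exists a polynomial of degree $d$ attaining the bound in (1), and there exists a polynomial of degree $d$ attaining the bound in (2).
   Context: A point $z_0\in\mathbb{C}$ is a critical point of multiplicity $j$ of $g\in\mathbb{C}[z]$ if $g^{(1)}(z_0)=\dots=g^{(j)}(z_0)=0$; $g(z_0)$ is its critical value. *)

theory Defs
  imports "HOL-Computational_Algebra.Polynomial" Complex_Main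
begin

definition crit_point_mult :: "complex poly \<Rightarrow> nat \<Rightarrow> complex \<Rightarrow> bool" where
  "crit_point_mult g j z0 \<longleftrightarrow> (\<forall>i\<in>{1..j}. poly ((pderiv ^^ i) g) z0 = 0)"

text \<open>g has only isolated critical points (for polynomials: g' is not the zero polynomial).\<close>
definition isolated_crit_points :: "complex poly \<Rightarrow> bool" where
  "isolated_crit_points g \<longleftrightarrow> (\<forall>z. \<exists>e>0. \<forall>w. w \<noteq> z \<and> cmod (w - z) < e \<longrightarrow> poly (pderiv g) w \<noteq> 0)"

end

theory Submission
  imports Defs
begin

lemma order_pow: "p \<noteq> 0 \<Longrightarrow> order a (p ^ n) = n * order a p"
  for p :: "complex poly"
  by (induct n) (auto simp: order_mult)

lemma all_le_Suc: "(\<forall>i\<le>Suc j. P i) = (P 0 \<and> (\<forall>i\<le>j. P (Suc i)))"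
  by (auto, case_tac i, auto)

lemma derivs_order:
  fixes p :: "complex poly"
  assumes "p \<noteq> 0"
  shows "(\<forall>i\<le>j. poly ((pderiv ^^ i) p) z = 0) \<longleftrightarrow> j < order z p"
  using assms
proof (induct j arbitrary: p)
  case 0
  then show ?case by (simp add: order_root)
next
  case (Suc j)
  have eq: "(\<forall>i\<le>Suc j. poly ((pderiv ^^ i) p) z = 0) \<longleftrightarrow>
     poly p z = 0 \<and> (\<forall>i\<le>j. poly ((pderiv ^^ i) (pderiv p)) z = 0)"
    by (auto simp del: funpow.simps simp: funpow_Suc_right all_le_Suc)
  show ?case
  proof (cases "pderiv p = 0")
    case True
    then have "degree p = 0" by (simp add: pderiv_eq_0_iff)
    then obtain c where c: "p = [:c:]" by (metis degree_eq_zeroE)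
    with Suc.prems have "c \<noteq> 0" by auto
    then show ?thesis unfolding eq using c order_degree[of "[:c:]" z] by (auto simp: order_root)
  next
    case False
    show ?thesis unfolding eq Suc.hyps[OF False]
      using order_pderiv[OF Suc.prems, of z] order_root[of p z] Suc.prems by auto
  qed
qed

lemma crit_iff:
  fixes g :: "complex poly"
  assumes "pderiv g \<noteq> 0" "1 \<le> j"
  shows "crit_point_mult g j z \<longleftrightarrow> j \<le> order z (pderiv g)"
proof -
  have "crit_point_mult g j z \<longleftrightarrow> (\<forall>i\<le>j-1. poly ((pderiv ^^ i) (pderiv g)) z = 0)"
    unfolding crit_point_mult_def
  proof
    assume H: "\<forall>i\<in>{1..j}. poly ((pderiv ^^ i) g) z = 0"
    show "\<forall>i\<le>j-1. poly ((pderiv ^^ i) (pderiv g)) z = 0"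
    proof (intro allI impI)
      fix i assume "i \<le> j - 1"
      then have "Suc i \<in> {1..j}" using assms by auto
      then show "poly ((pderiv ^^ i) (pderiv g)) z = 0" using H
        by (metis funpow_Suc_right comp_apply)
    qed
  next
    assume H: "\<forall>i\<le>j-1. poly ((pderiv ^^ i) (pderiv g)) z = 0"
    show "\<forall>i\<in>{1..j}. poly ((pderiv ^^ i) g) z = 0"
    proof
      fix i assume "i \<in> {1..j}"
      then obtain k where k: "i = Suc k" "k \<le> j - 1" by (cases i) auto
      then show "poly ((pderiv ^^ i) g) z = 0" using H
        by (metis funpow_Suc_right comp_apply)
    qed
  qed
  also have "\<dots> \<longleftrightarrow> j - 1 < order z (pderiv g)" using derivs_order[OF assms(1)] .
  also have "\<dots> \<longleftrightarrow> j \<le> order z (pderiv g)" using assms by auto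
  finally show ?thesis .
qed

lemma crit_val_iff:
  fixes g :: "complex poly"
  assumes "g \<noteq> 0"
  shows "(crit_point_mult g j z \<and> poly g z = 0) \<longleftrightarrow> j < order z g"
proof -
  have "(crit_point_mult g j z \<and> poly g z = 0) \<longleftrightarrow> (\<forall>i\<le>j. poly ((pderiv ^^ i) g) z = 0)"
    unfolding crit_point_mult_def
    by (auto, metis funpow_0 le_0_eq not_less_eq_eq atLeastAtMost_iff less_one not_le)
  then show ?thesis using derivs_order[OF assms] by simp
qed

definition anti :: "complex poly \<Rightarrow> complex poly" where
  "anti h = Poly (0 # map (\<lambda>i. coeff h i / of_nat (Suc i)) [0..<Suc (degree h)])"

lemma pderiv_anti: "pderiv (anti h) = h"
proof (rule poly_eqI)
  fix n
  show "coeff (pderiv (anti h)) n = coeff h n"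
  proof (cases "n \<le> degree h")
    case True
    have "complex_of_nat (Suc n) \<noteq> 0" by (rule of_nat_neq_0)
    with True show ?thesis unfolding coeff_pderiv anti_def
      by (simp add: nth_default_def nth_append del: upt_Suc)
  next
    case False
    then show ?thesis unfolding coeff_pderiv anti_def
      by (simp add: nth_default_def coeff_eq_0 del: upt_Suc)
  qed
qed

lemma isolated_if: "pderiv g \<noteq> 0 \<Longrightarrow> isolated_crit_points g"
  unfolding isolated_crit_points_def
proof
  fix z
  assume h: "pderiv g \<noteq> 0"
  define S where "S = {w. poly (pderiv g) w = 0} - {z}"
  have fin: "finite S" unfolding S_def using poly_roots_finite[OF h] by auto
  define e where "e = Min (insert 1 ((\<lambda>w. cmod (w - z)) ` S))"
  have "e > 0" unfolding e_def using fin by (auto simp: S_def)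
  moreover have "\<forall>w. w \<noteq> z \<and> cmod (w - z) < e \<longrightarrow> poly (pderiv g) w \<noteq> 0"
  proof (intro allI impI)
    fix w assume w: "w \<noteq> z \<and> cmod (w - z) < e"
    show "poly (pderiv g) w \<noteq> 0"
    proof
      assume "poly (pderiv g) w = 0"
      then have "w \<in> S" using w by (auto simp: S_def)
      then have "e \<le> cmod (w - z)" unfolding e_def using fin by simp
      then show False using w by simp
    qed
  qed
  ultimately show "\<exists>e>0. \<forall>w. w \<noteq> z \<and> cmod (w - z) < e \<longrightarrow> poly (pderiv g) w \<noteq> 0" by blast
qed

definition PP :: "nat \<Rightarrow> complex poly" where
  "PP k = (\<Prod>i\<in>{1..k}. [:- of_nat i, 1:])"

lemma PP_nz: "PP k \<noteq> 0" unfolding PP_def by auto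

lemma degree_PP: "degree (PP k) = k"
  unfolding PP_def by (subst degree_prod_sum_eq) auto

lemma poly_PP: "poly (PP k) z = 0 \<longleftrightarrow> z \<in> of_nat ` {1..k}"
  unfolding PP_def poly_prod by auto

lemma key:
  fixes m r k :: nat
  assumes "1 \<le> m" "r < m"
  defines "P \<equiv> PP k ^ m * [:0,1:] ^ r"
  shows "P \<noteq> 0" "degree P = k * m + r" "{z. m \<le> order z P} = of_nat ` {1..k}"
proof -
  show nz: "P \<noteq> 0" unfolding P_def using PP_nz by auto
  show "degree P = k * m + r" unfolding P_def
    by (simp add: degree_mult_eq degree_power_eq PP_nz degree_PP)
  have ord: "order z P = m * order z (PP k) + r * order z [:0,1:]" for z
    unfolding P_def using PP_nz by (simp add: order_mult order_pow)
  have ox: "order z [:0,1::complex:] \<le> 1" for z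
    using order_degree[of "[:0,1::complex:]" z] by simp
  show "{z. m \<le> order z P} = of_nat ` {1..k}"
  proof (intro set_eqI iffI)
    fix z assume "z \<in> {z. m \<le> order z P}"
    then have "m \<le> m * order z (PP k) + r * order z [:0,1:]" using ord by simp
    moreover have "r * order z [:0,1:] \<le> r" using ox[of z] by simp
    ultimately have "order z (PP k) \<noteq> 0" using assms by (cases "order z (PP k)") auto
    then show "z \<in> of_nat ` {1..k}" using poly_PP order_root by metis
  next
    fix z :: complex assume "z \<in> of_nat ` {1..k}"
    then have "order z (PP k) \<noteq> 0" using poly_PP order_root PP_nz by metis
    then show "z \<in> {z. m \<le> order z P}" using ord
      by (simp add: trans_le_add1)
  qed
qed

lemma card_img: "card (of_nat ` {1..k} :: complex set) = k"
  by (subst card_image) (auto simp: inj_on_def)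

theorem mainTheorem5:
  fixes d j :: nat
  assumes "1 \<le> j" and "j < d"
  shows "(\<exists>g :: complex poly. degree g = d \<and> isolated_crit_points g \<and>
            finite {z. crit_point_mult g j z} \<and>
            card {z. crit_point_mult g j z} = (d - 1) div j)
       \<and> (\<exists>(g :: complex poly) (w :: complex). degree g = d \<and> isolated_crit_points g \<and>
            finite {z. crit_point_mult g j z \<and> poly g z = w} \<and>
            card {z. crit_point_mult g j z \<and> poly g z = w} = d div (j + 1))"
proof
  define h where "h = PP ((d - 1) div j) ^ j * [:0,1:] ^ ((d - 1) mod j)"
  have hk: "h \<noteq> 0" "degree h = (d - 1) div j * j + (d - 1) mod j"
     "{z. j \<le> order z h} = of_nat ` {1..(d - 1) div j}"
    using key[of j "(d - 1) mod j" "(d - 1) div j"] assms unfolding h_def by auto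
  define g where "g = anti h"
  have pg: "pderiv g = h" unfolding g_def by (rule pderiv_anti)
  have "degree h = d - 1" using hk(2) div_mult_mod_eq[of "d-1" j] by linarith
  then have dg: "degree g = d" using pg degree_pderiv[of g] assms hk(1)
    by (metis Suc_pred' bot_nat_0.extremum_strict diff_0_eq_0 pderiv_eq_0_iff less_Suc_eq_0_disj not_less_eq)
  have S: "{z. crit_point_mult g j z} = of_nat ` {1..(d - 1) div j}"
    using crit_iff[of g j] pg hk(1,3) assms by auto
  show "\<exists>g :: complex poly. degree g = d \<and> isolated_crit_points g \<and>
            finite {z. crit_point_mult g j z} \<and>
            card {z. crit_point_mult g j z} = (d - 1) div j"
    by (rule exI[of _ g]) (simp only: S card_img, simp add: dg isolated_if pg hk(1))
next
  define g where "g = PP (d div (j+1)) ^ (j+1) * [:0,1:] ^ (d mod (j+1))"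
  have gk: "g \<noteq> 0" "degree g = d div (j+1) * (j+1) + d mod (j+1)"
     "{z. j+1 \<le> order z g} = of_nat ` {1..d div (j+1)}"
    using key[of "j+1" "d mod (j+1)" "d div (j+1)"] assms unfolding g_def by auto
  have dg: "degree g = d" using gk(2) div_mult_mod_eq[of d "j+1"] by linarith
  have pg: "pderiv g \<noteq> 0" using dg assms by (simp add: pderiv_eq_0_iff)
  have S: "{z. crit_point_mult g j z \<and> poly g z = 0} = of_nat ` {1..d div (j+1)}"
    using crit_val_iff[OF gk(1), of j] gk(3) by (simp add: Suc_le_eq)
  show "\<exists>(g :: complex poly) (w :: complex). degree g = d \<and> isolated_crit_points g \<and>
            finite {z. crit_point_mult g j z \<and> poly g z = w} \<and>
            card {z. crit_point_mult g j z \<and> poly g z = w} = d div (j + 1)"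
    by (rule exI[of _ g], rule exI[of _ 0]) (simp only: S card_img, simp add: dg isolated_if pg)
qed

end
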